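(* Let $\phi$ satisfy $B_\phi>0$. For every centred symmetric probability distribution $\mu$ on $\mathbb{R}$ with $\mu_2=1$ and $\mu_6<\infty$ and every $\mathfrak g\in\mathbb{R}$, $$\theta^2\ \ge\ \frac{1}{144}\Big(A_\phi-\frac{C_\phi^2}{B_\phi}\Big)\ \ge 0 .$$ Moreover the bound is approached: if $\mu_4>1$, $\mu_6=\mu_4^2$ and $\mathfrak g=\dfrac{\mu_4(C_\phi-3B_\phi)+6B_\phi}{12B_\phi(\mu_4-1)}$, then $\theta^2=\frac{\mu_4^2}{144}(A_\phi-C_\phi^2/B_\phi)$, which tends to the lower bound as $\mu_4\downarrow1$. For $a>1$, the symmetric distribution $\nu(a)$ on $\{-\sqrt a,0,\sqrt a\}$ with $\nu(a)(\{\pm\sqrt a\})=1/(2a)$ satisfies $\mu_2=1$, $\mu_4=a$, $\mu_6=a^2$.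
   Context: Here $\pi=e^\phi$ is a probability density on $\mathbb{R}$ with $A_\phi=\mathbb{E}_\pi[(\phi''')^2]$, $B_\phi=\mathbb{E}_\pi[(\phi'\phi'')^2]$, $C_\phi=\mathbb{E}_\pi[\phi'\phi''\phi''']$ finite, $\mu_k=\int z^k\mu(dz)$, and $\theta^2=\mu_6\{\tfrac{1}{144}A_\phi+(\tfrac14+\mathfrak g)^2B_\phi-\tfrac16(\tfrac14+\mathfrak g)C_\phi\}+\mu_4\{\tfrac16(\tfrac12+\mathfrak g)C_\phi-2(\tfrac14+\mathfrak g)(\tfrac12+\mathfrak g)B_\phi\}+(\tfrac12+\mathfrak g)^2B_\phi$, where $\mathfrak g$ plays the role of $g''(1)$ for the balancing function $g$. *)

theory Defs
  imports "HOL-Probability.Probability"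
begin

definition d1 :: "(real \<Rightarrow> real) \<Rightarrow> real \<Rightarrow> real" where "d1 \<phi> = deriv \<phi>"
definition d2 :: "(real \<Rightarrow> real) \<Rightarrow> real \<Rightarrow> real" where "d2 \<phi> = deriv (deriv \<phi>)"
definition d3 :: "(real \<Rightarrow> real) \<Rightarrow> real \<Rightarrow> real" where "d3 \<phi> = deriv (deriv (deriv \<phi>))"

text \<open>Expectations under the density pi = exp phi (w.r.t. Lebesgue measure).\<close>
definition A_phi :: "(real \<Rightarrow> real) \<Rightarrow> real" where
  "A_phi \<phi> = (\<integral>x. exp (\<phi> x) * (d3 \<phi> x)^2 \<partial>lborel)"
definition B_phi :: "(real \<Rightarrow> real) \<Rightarrow> real" where
  "B_phi \<phi> = (\<integral>x. exp (\<phi> x) * (d1 \<phi> x * d2 \<phi> x)^2 \<partial>lborel)"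
definition C_phi :: "(real \<Rightarrow> real) \<Rightarrow> real" where
  "C_phi \<phi> = (\<integral>x. exp (\<phi> x) * (d1 \<phi> x * d2 \<phi> x * d3 \<phi> x) \<partial>lborel)"

definition moment :: "real measure \<Rightarrow> nat \<Rightarrow> real" where
  "moment \<mu> k = (\<integral>z. z ^ k \<partial>\<mu>)"

text \<open>theta^2 as a function of A, B, C, mu_4, mu_6 and g (= g''(1)).\<close>
definition theta_sq :: "real \<Rightarrow> real \<Rightarrow> real \<Rightarrow> real \<Rightarrow> real \<Rightarrow> real \<Rightarrow> real" where
  "theta_sq A B C m4 m6 g =
     m6 * (A / 144 + (1/4 + g)^2 * B - (1/6) * (1/4 + g) * C)
   + m4 * ((1/6) * (1/2 + g) * C - 2 * (1/4 + g) * (1/2 + g) * B)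
   + (1/2 + g)^2 * B"

definition admissible :: "real measure \<Rightarrow> bool" where
  "admissible \<mu> \<longleftrightarrow> prob_space \<mu> \<and> sets \<mu> = sets borel \<and>
     distr \<mu> borel uminus = \<mu> \<and>
     integrable \<mu> (\<lambda>z. z ^ 6) \<and> moment \<mu> 1 = 0 \<and> moment \<mu> 2 = 1"

definition nu :: "real \<Rightarrow> real pmf" where
  "nu a = embed_pmf (\<lambda>z. if z = sqrt a \<or> z = - sqrt a then 1 / (2 * a)
                          else if z = 0 then 1 - 1 / a else 0)"

end

theory Submission
  imports Defs
begin


lemma nu_pmf:
  assumes a: "a > (1::real)"
  shows "pmf (nu a) z = (if z = sqrt a \<or> z = - sqrt a then 1 / (2 * a)
                          else if z = 0 then 1 - 1 / a else 0)"
proof -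
  define f where "f = (\<lambda>z. if z = sqrt a \<or> z = - sqrt a then 1 / (2 * a)
                          else if z = 0 then 1 - 1 / a else (0::real))"
  have sp: "sqrt a > 0" using a by simp
  have nn: "\<And>x. 0 \<le> f x" using a by (auto simp: f_def field_simps)
  have "(\<integral>\<^sup>+x. ennreal (f x) \<partial>count_space UNIV) = (\<Sum>x\<in>{sqrt a, - sqrt a, 0}. ennreal (f x))"
    by (rule nn_integral_count_space') (auto simp: f_def)
  also have "\<dots> = ennreal (\<Sum>x\<in>{sqrt a, - sqrt a, 0}. f x)"
    using nn by (simp add: sum_ennreal)
  also have "(\<Sum>x\<in>{sqrt a, - sqrt a, 0}. f x) = 1"
    using sp a by (simp add: f_def field_simps)
  finally have "(\<integral>\<^sup>+x. ennreal (f x) \<partial>count_space UNIV) = 1" by simp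
  then show ?thesis unfolding nu_def f_def[symmetric]
    using pmf_embed_pmf[of f z] nn by (simp add: f_def)
qed

lemma nu_facts:
  assumes a: "a > (1::real)"
  shows "set_pmf (nu a) \<subseteq> {- sqrt a, 0, sqrt a}
        \<and> pmf (nu a) (sqrt a) = 1 / (2 * a) \<and> pmf (nu a) (- sqrt a) = 1 / (2 * a)
        \<and> (\<forall>z. pmf (nu a) (- z) = pmf (nu a) z)
        \<and> measure_pmf.expectation (nu a) (\<lambda>z. z ^ 2) = 1
        \<and> measure_pmf.expectation (nu a) (\<lambda>z. z ^ 4) = a
        \<and> measure_pmf.expectation (nu a) (\<lambda>z. z ^ 6) = a ^ 2"
proof -
  have sp: "sqrt a > 0" using a by simp
  have sq: "sqrt a ^ 2 = a" using a by simp
  have s4: "sqrt a ^ 4 = a^2" using sq by (metis power_mult numeral_Bit0 mult_2 power_add power2_eq_square)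
  have s6: "sqrt a ^ 6 = a^3" using sq by (metis power_mult num_double numeral_times_numeral)
  have set: "set_pmf (nu a) \<subseteq> {- sqrt a, 0, sqrt a}"
    using a by (auto simp: set_pmf_iff nu_pmf split: if_splits)
  have E: "\<And>k. measure_pmf.expectation (nu a) (\<lambda>z. z ^ k) = (\<Sum>x\<in>{sqrt a, - sqrt a, 0}. pmf (nu a) x *\<^sub>R x ^ k)"
    by (rule integral_measure_pmf) (use set in auto)
  have e: "even k \<Longrightarrow> k > 0 \<Longrightarrow> measure_pmf.expectation (nu a) (\<lambda>z. z ^ k) = sqrt a ^ k / a" for k
    unfolding E using sp a by (simp add: nu_pmf field_simps)
  show ?thesis
    using set a sp
    apply (intro conjI)
          apply simp
         apply (simp add: nu_pmf)
        apply (simp add: nu_pmf)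
       apply (auto simp: nu_pmf)[1]
      apply (subst e; simp add: sq)
     apply (subst e; simp add: s4 power2_eq_square)
    apply (subst e; simp add: s6 power2_eq_square power3_eq_cube)
    done
qed



lemma AC_bound:
  fixes e p q :: "real \<Rightarrow> real"
  assumes iA: "integrable lborel (\<lambda>x. e x * (q x)^2)"
    and iB: "integrable lborel (\<lambda>x. e x * (p x)^2)"
    and iC: "integrable lborel (\<lambda>x. e x * (p x * q x))"
    and e0: "\<And>x. e x \<ge> 0"
  shows "t^2 * (\<integral>x. e x * (p x)^2 \<partial>lborel) - 2 * t * (\<integral>x. e x * (p x * q x) \<partial>lborel)
          + (\<integral>x. e x * (q x)^2 \<partial>lborel) \<ge> 0"
proof -
  have eq: "(\<lambda>x. e x * (t * p x - q x)^2) = (\<lambda>x. t^2 * (e x * (p x)^2) - 2 * t * (e x * (p x * q x)) + e x * (q x)^2)"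
    by (rule ext) (simp add: power2_eq_square algebra_simps)
  have "0 \<le> (\<integral>x. e x * (t * p x - q x)^2 \<partial>lborel)"
    by (rule integral_nonneg_AE) (simp add: e0)
  also have "\<dots> = t^2 * (\<integral>x. e x * (p x)^2 \<partial>lborel) - 2 * t * (\<integral>x. e x * (p x * q x) \<partial>lborel)
          + (\<integral>x. e x * (q x)^2 \<partial>lborel)"
    unfolding eq using iA iB iC by simp
  finally show ?thesis .
qed

lemma moment_bounds:
  assumes adm: "admissible \<mu>"
  shows "moment \<mu> 4 \<ge> 1" "moment \<mu> 6 \<ge> (moment \<mu> 4)^2"
proof -
  interpret prob_space \<mu> using adm by (simp add: admissible_def)
  have i6: "integrable \<mu> (\<lambda>z. z ^ 6)" and m2: "moment \<mu> 2 = 1"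
    and sb: "sets \<mu> = sets borel" using adm by (auto simp: admissible_def)
  have meas: "(\<lambda>z::real. z ^ k) \<in> borel_measurable \<mu>" for k
    using sb by (simp add: measurable_cong_sets[OF sb refl])
  have ik: "integrable \<mu> (\<lambda>z. z ^ k)" if "k \<le> 6" for k
  proof (rule Bochner_Integration.integrable_bound[of _ "\<lambda>z. 1 + z^6"])
    show "integrable \<mu> (\<lambda>z. 1 + z^6)" using i6 by simp
    show "(\<lambda>z::real. z ^ k) \<in> borel_measurable \<mu>" by (rule meas)
    show "AE x in \<mu>. norm (x ^ k) \<le> norm (1 + x ^ 6)"
    proof (rule AE_I2)
      fix x :: real
      have "\<bar>x\<bar> ^ k \<le> 1 + \<bar>x\<bar> ^ 6"
      proof (cases "\<bar>x\<bar> \<le> 1")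
        case True
        then have "\<bar>x\<bar> ^ k \<le> 1" by (simp add: power_le_one)
        then show ?thesis by (smt (verit) zero_le_power abs_ge_zero)
      next
        case False
        then have "\<bar>x\<bar> ^ k \<le> \<bar>x\<bar> ^ 6" using that by (intro power_increasing) auto
        then show ?thesis by simp
      qed
      moreover have "\<bar>x\<bar> ^ 6 = x ^ 6" by (simp add: power_abs[symmetric] abs_of_nonneg zero_le_even_power)
      ultimately show "norm (x ^ k) \<le> norm (1 + x ^ 6)"
        by (simp add: power_abs zero_le_even_power)
    qed
  qed
  have i2: "integrable \<mu> (\<lambda>z. z ^ 2)" and i4: "integrable \<mu> (\<lambda>z. z ^ 4)" by (auto intro: ik)
  have eq1: "(\<lambda>z::real. (z^2 - 1)^2) = (\<lambda>z. z^4 - 2 * z^2 + 1)"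
    by (rule ext) (simp add: power2_eq_square power4_eq_xxxx algebra_simps)
  have "0 \<le> (\<integral>z. (z^2 - 1)^2 \<partial>\<mu>)" by simp
  also have "\<dots> = moment \<mu> 4 - 2 * moment \<mu> 2 + 1"
    unfolding eq1 moment_def using i2 i4 by (simp add: prob_space)
  finally show "moment \<mu> 4 \<ge> 1" using m2 by simp
  define t where "t = moment \<mu> 4"
  have eq2: "(\<lambda>z::real. (t * z - z^3)^2) = (\<lambda>z. t^2 * z^2 - 2 * t * z^4 + z^6)"
    by (rule ext) (simp add: power2_eq_square power4_eq_xxxx algebra_simps
        numeral_eq_Suc)
  have "0 \<le> (\<integral>z. (t * z - z^3)^2 \<partial>\<mu>)" by simp
  also have "\<dots> = t^2 * moment \<mu> 2 - 2 * t * moment \<mu> 4 + moment \<mu> 6"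
    unfolding eq2 moment_def using i2 i4 i6 by simp
  finally show "moment \<mu> 6 \<ge> (moment \<mu> 4)^2" using m2 unfolding t_def
    by (simp add: power2_eq_square)
qed

lemma theta_identity:
  assumes B: "B > 0"
  shows "theta_sq A B C m4 m6 g - (A - C^2/B)/144 =
     (m6 - m4^2) * ((A - C^2/B)/144 + B * (g + 1/4 - C/(12*B))^2)
     + (m4^2 - 1) * (A - C^2/B)/144 + B * (m4 * (g + 1/4 - C/(12*B)) - (g + 1/2))^2"
  using B unfolding theta_sq_def by (simp add: field_simps power2_eq_square)

theorem proposition5:
  fixes \<phi> :: "real \<Rightarrow> real"
  assumes diff1: "\<And>x. \<phi> differentiable at x"
    and diff2: "\<And>x. deriv \<phi> differentiable at x"
    and diff3: "\<And>x. deriv (deriv \<phi>) differentiable at x"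
    and dens_int: "integrable lborel (\<lambda>x. exp (\<phi> x))"
    and dens_one: "(\<integral>x. exp (\<phi> x) \<partial>lborel) = 1"
    and A_fin: "integrable lborel (\<lambda>x. exp (\<phi> x) * (d3 \<phi> x)^2)"
    and B_fin: "integrable lborel (\<lambda>x. exp (\<phi> x) * (d1 \<phi> x * d2 \<phi> x)^2)"
    and C_fin: "integrable lborel (\<lambda>x. exp (\<phi> x) * (d1 \<phi> x * d2 \<phi> x * d3 \<phi> x))"
    and B_pos: "B_phi \<phi> > 0"
  shows
    "(\<forall>\<mu> g. admissible \<mu> \<longrightarrow>
        theta_sq (A_phi \<phi>) (B_phi \<phi>) (C_phi \<phi>) (moment \<mu> 4) (moment \<mu> 6) g
          \<ge> (A_phi \<phi> - (C_phi \<phi>)^2 / B_phi \<phi>) / 144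
        \<and> (A_phi \<phi> - (C_phi \<phi>)^2 / B_phi \<phi>) / 144 \<ge> 0)
   \<and> (\<forall>\<mu> g. admissible \<mu> \<and> moment \<mu> 4 > 1 \<and> moment \<mu> 6 = (moment \<mu> 4)^2 \<and>
        g = (moment \<mu> 4 * (C_phi \<phi> - 3 * B_phi \<phi>) + 6 * B_phi \<phi>)
              / (12 * B_phi \<phi> * (moment \<mu> 4 - 1)) \<longrightarrow>
        theta_sq (A_phi \<phi>) (B_phi \<phi>) (C_phi \<phi>) (moment \<mu> 4) (moment \<mu> 6) g
          = (moment \<mu> 4)^2 / 144 * (A_phi \<phi> - (C_phi \<phi>)^2 / B_phi \<phi>))
   \<and> ((\<lambda>m4. m4^2 / 144 * (A_phi \<phi> - (C_phi \<phi>)^2 / B_phi \<phi>))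
        \<longlongrightarrow> (A_phi \<phi> - (C_phi \<phi>)^2 / B_phi \<phi>) / 144) (at_right 1)
   \<and> (\<forall>a::real. a > 1 \<longrightarrow>
        set_pmf (nu a) \<subseteq> {- sqrt a, 0, sqrt a}
        \<and> pmf (nu a) (sqrt a) = 1 / (2 * a) \<and> pmf (nu a) (- sqrt a) = 1 / (2 * a)
        \<and> (\<forall>z. pmf (nu a) (- z) = pmf (nu a) z)
        \<and> measure_pmf.expectation (nu a) (\<lambda>z. z ^ 2) = 1
        \<and> measure_pmf.expectation (nu a) (\<lambda>z. z ^ 4) = a
        \<and> measure_pmf.expectation (nu a) (\<lambda>z. z ^ 6) = a ^ 2)"
proof -
  let ?A = "A_phi \<phi>" and ?B = "B_phi \<phi>" and ?C = "C_phi \<phi>"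
  define D where "D = ?A - ?C^2 / ?B"
  have B: "?B > 0" by (rule B_pos)
  have quad: "t^2 * ?B - 2 * t * ?C + ?A \<ge> 0" for t
    using AC_bound[of "\<lambda>x. exp (\<phi> x)" "d3 \<phi>" "\<lambda>x. d1 \<phi> x * d2 \<phi> x" t] A_fin B_fin C_fin
    unfolding A_phi_def B_phi_def C_phi_def by (simp add: mult_ac)
  have D0: "D \<ge> 0"
  proof -
    have "(?C/?B)^2 * ?B - 2 * (?C/?B) * ?C + ?A \<ge> 0" by (rule quad)
    also have "(?C/?B)^2 * ?B - 2 * (?C/?B) * ?C + ?A = D"
      using B unfolding D_def by (simp add: field_simps power2_eq_square)
    finally show ?thesis .
  qed
  have P1: "theta_sq ?A ?B ?C (moment \<mu> 4) (moment \<mu> 6) g \<ge> D / 144" if adm: "admissible \<mu>" for \<mu> g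
  proof -
    have m4: "moment \<mu> 4 \<ge> 1" and m6: "moment \<mu> 6 \<ge> (moment \<mu> 4)^2"
      using moment_bounds[OF adm] by auto
    have "moment \<mu> 4 ^2 \<ge> 1" using m4 by (simp add: one_le_power)
    then have "0 \<le> (moment \<mu> 6 - moment \<mu> 4^2) * (D/144 + ?B * (g + 1/4 - ?C/(12*?B))^2)
     + (moment \<mu> 4^2 - 1) * D/144 + ?B * (moment \<mu> 4 * (g + 1/4 - ?C/(12*?B)) - (g + 1/2))^2"
      using m6 D0 B by (intro add_nonneg_nonneg mult_nonneg_nonneg divide_nonneg_pos) auto
    then show ?thesis using theta_identity[OF B, of ?A ?C "moment \<mu> 4" "moment \<mu> 6" g]
      unfolding D_def by linarith
  qed
  have P2: "theta_sq ?A ?B ?C (moment \<mu> 4) (moment \<mu> 6) g = (moment \<mu> 4)^2 / 144 * D"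
    if "moment \<mu> 4 > 1" "moment \<mu> 6 = (moment \<mu> 4)^2"
       "g = (moment \<mu> 4 * (?C - 3 * ?B) + 6 * ?B) / (12 * ?B * (moment \<mu> 4 - 1))" for \<mu> g
  proof -
    have z: "moment \<mu> 4 * (g + 1/4 - ?C/(12*?B)) - (g + 1/2) = 0"
      using that(1) B unfolding that(3) by (simp add: field_simps)
    have "theta_sq ?A ?B ?C (moment \<mu> 4) (moment \<mu> 6) g - D/144 = (moment \<mu> 4^2 - 1) * D/144"
      using theta_identity[OF B, of ?A ?C "moment \<mu> 4" "moment \<mu> 6" g] that(2) z
      unfolding D_def by simp
    then show ?thesis by (simp add: field_simps)
  qed
  have P3: "((\<lambda>m4. m4^2 / 144 * D) \<longlongrightarrow> D / 144) (at_right 1)"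
  proof -
    have "((\<lambda>m4::real. m4^2 * (D / 144)) \<longlongrightarrow> 1^2 * (D / 144)) (at 1)"
      by (rule tendsto_mult_right[OF tendsto_power[OF tendsto_ident_at]])
    then have "((\<lambda>m4::real. m4^2 / 144 * D) \<longlongrightarrow> D / 144) (at 1)"
      by simp
    then show ?thesis by (rule tendsto_mono[OF at_le[OF subset_UNIV]])
  qed
  have Q1: "\<forall>\<mu> g. admissible \<mu> \<longrightarrow>
        theta_sq ?A ?B ?C (moment \<mu> 4) (moment \<mu> 6) g \<ge> D / 144 \<and> D / 144 \<ge> 0"
    using P1 D0 by simp
  have Q2: "\<forall>\<mu> g. admissible \<mu> \<and> moment \<mu> 4 > 1 \<and> moment \<mu> 6 = (moment \<mu> 4)^2 \<and>
        g = (moment \<mu> 4 * (?C - 3 * ?B) + 6 * ?B) / (12 * ?B * (moment \<mu> 4 - 1)) \<longrightarrow>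
        theta_sq ?A ?B ?C (moment \<mu> 4) (moment \<mu> 6) g = (moment \<mu> 4)^2 / 144 * D"
    using P2 by blast
  have Q4: "\<forall>a::real. a > 1 \<longrightarrow>
        set_pmf (nu a) \<subseteq> {- sqrt a, 0, sqrt a}
        \<and> pmf (nu a) (sqrt a) = 1 / (2 * a) \<and> pmf (nu a) (- sqrt a) = 1 / (2 * a)
        \<and> (\<forall>z. pmf (nu a) (- z) = pmf (nu a) z)
        \<and> measure_pmf.expectation (nu a) (\<lambda>z. z ^ 2) = 1
        \<and> measure_pmf.expectation (nu a) (\<lambda>z. z ^ 4) = a
        \<and> measure_pmf.expectation (nu a) (\<lambda>z. z ^ 6) = a ^ 2"
    using nu_facts by blast
  show ?thesis
    unfolding D_def[symmetric] using Q1 Q2 P3 Q4 by (intro conjI)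
qed

end
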